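(* Let $P=(T;U,V)$ be a 3M-DAP with $u = v+1$. Then $f(P) > x_u - x_v$.
   Context: A three-matrix division and assignment problem (3M-DAP) $P=(T;U,V)$ is specified by integers $t,u,v$ (numbers of columns), integers $s_t, s_u, s_v$ (numbers of rows) and rationals $x_t, x_u, x_v$ (required row sums), subject to: $t \ge 2$, $u \ge 2$, $v \ge 1$; if $v = 1$ then $v s_v \le (t-2)s_t$; $s_t > 0$, $s_u > 0$, $s_v \ge 0$; $s_u u + s_v v = s_t t$; $s_u x_u + s_v x_v = s_t x_t$; and $x_u/u < x_v/v$. A feasible solution assigns real values to the entries of an $s_t\times t$ matrix $T$, an $s_u \times u$ matrix $U$ and an $s_v \times v$ matrix $V$ so that every row of $T$, $U$, $V$ sums to $x_t$, $x_u$, $x_v$ respectively, and the multiset of entries of $T$ equals the multiset union of the entries of $U$ and $V$. $f(P)$ is the maximum, over feasible solutions, of the smallest entry of $T$. *)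

theory Defs
  imports Main "HOL-Library.Multiset" Complex_Main
begin

text \<open>A three-matrix division and assignment problem P = (T;U,V), given by its parameters
  t u v (numbers of columns), st su sv (numbers of rows), xt xu xv (row sums).\<close>
definition is_3MDAP ::
  "nat \<Rightarrow> nat \<Rightarrow> nat \<Rightarrow> nat \<Rightarrow> nat \<Rightarrow> nat \<Rightarrow> real \<Rightarrow> real \<Rightarrow> real \<Rightarrow> bool" where
  "is_3MDAP t u v st su sv xt xu xv \<longleftrightarrow>
     xt \<in> \<rat> \<and> xu \<in> \<rat> \<and> xv \<in> \<rat> \<and>
     t \<ge> 2 \<and> u \<ge> 2 \<and> v \<ge> 1 \<and>
     (v = 1 \<longrightarrow> int v * int sv \<le> (int t - 2) * int st) \<and>
     st > 0 \<and> su > 0 \<and>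
     su * u + sv * v = st * t \<and>
     real su * xu + real sv * xv = real st * xt \<and>
     xu / real u < xv / real v"

definition entries :: "(nat \<Rightarrow> nat \<Rightarrow> real) \<Rightarrow> nat \<Rightarrow> nat \<Rightarrow> real multiset" where
  "entries M m n = image_mset (\<lambda>(i,j). M i j) (mset_set ({..<m} \<times> {..<n}))"

definition feasible_3MDAP ::
  "nat \<Rightarrow> nat \<Rightarrow> nat \<Rightarrow> nat \<Rightarrow> nat \<Rightarrow> nat \<Rightarrow> real \<Rightarrow> real \<Rightarrow> real \<Rightarrow>
   (nat \<Rightarrow> nat \<Rightarrow> real) \<Rightarrow> (nat \<Rightarrow> nat \<Rightarrow> real) \<Rightarrow> (nat \<Rightarrow> nat \<Rightarrow> real) \<Rightarrow> bool" where
  "feasible_3MDAP t u v st su sv xt xu xv T U V \<longleftrightarrow>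
     (\<forall>i<st. (\<Sum>j<t. T i j) = xt) \<and>
     (\<forall>i<su. (\<Sum>j<u. U i j) = xu) \<and>
     (\<forall>i<sv. (\<Sum>j<v. V i j) = xv) \<and>
     entries T st t = entries U su u + entries V sv v"

text \<open>f(P): the maximum over feasible solutions of the smallest entry of T
  (taken as the supremum; the paper asserts it is attained).\<close>
definition f_3MDAP ::
  "nat \<Rightarrow> nat \<Rightarrow> nat \<Rightarrow> nat \<Rightarrow> nat \<Rightarrow> nat \<Rightarrow> real \<Rightarrow> real \<Rightarrow> real \<Rightarrow> real" where
  "f_3MDAP t u v st su sv xt xu xv =
     Sup {Min ((\<lambda>(i,j). T i j) ` ({..<st} \<times> {..<t})) | T U V.
            feasible_3MDAP t u v st su sv xt xu xv T U V}"

end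

theory Submission
  imports Defs
begin


lemma image_mset_mset_set_sum:
  "finite A \<Longrightarrow> image_mset g (mset_set A) = (\<Sum>x\<in>A. {#g x#})"
  by (induction A rule: finite_induct) auto

lemma entries_sum: "entries M m n = (\<Sum>i<m. \<Sum>j<n. {#M i j#})"
  unfolding entries_def
  by (simp add: image_mset_mset_set_sum sum.cartesian_product case_prod_unfold)

lemma sum_blocks: "(\<Sum>q<k*t. g q) = (\<Sum>i<k. \<Sum>j<t. g (i*t + j)) " for g :: "nat \<Rightarrow> 'a::comm_monoid_add"
proof (induction k)
  case 0 then show ?case by simp
next
  case (Suc k)
  have "(\<Sum>q<Suc k*t. g q) = (\<Sum>q<k*t. g q) + (\<Sum>q\<in>{k*t..<k*t+t}. g q)"
    by (simp add: add.commute sum.atLeastLessThan_concat lessThan_atLeast0 )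
  also have "(\<Sum>q\<in>{k*t..<k*t+t}. g q) = (\<Sum>j<t. g (k*t + j))"
    using sum.shift_bounds_nat_ivl[of g 0 "k*t" t] by (simp add: lessThan_atLeast0 add.commute)
  finally show ?case using Suc by simp
qed



lemma sum_const_mset: "finite A \<Longrightarrow> (\<Sum>x\<in>A. {#a#}) = replicate_mset (card A) a"
  by (induction A rule: finite_induct) auto

lemma rep_plus: "replicate_mset (a + b) x = replicate_mset a x + replicate_mset b x"
  by (simp add: multiset_eq_iff)

lemma sum_replicate_mset: "(\<Sum>i\<in>A. replicate_mset (g i) a) = replicate_mset (\<Sum>i\<in>A. g i) a"
  by (induction A rule: infinite_finite_induct) (auto simp: rep_plus)

lemma f_gt_from_witness:
  fixes d :: real
  assumes feas: "feasible_3MDAP t u v st su sv xt xu xv T U V"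
    and st: "st > 0" and t: "t > 0"
    and pos: "\<And>i j. i < st \<Longrightarrow> j < t \<Longrightarrow> T i j > d"
  shows "f_3MDAP t u v st su sv xt xu xv > d"
proof -
  define S where "S = {Min ((\<lambda>(i,j). T i j) ` ({..<st} \<times> {..<t})) | T U V.
            feasible_3MDAP t u v st su sv xt xu xv T U V}"
  have fS: "f_3MDAP t u v st su sv xt xu xv = Sup S" unfolding S_def f_3MDAP_def by simp
  define m0 where "m0 = Min ((\<lambda>(i,j). T i j) ` ({..<st} \<times> {..<t}))"
  have m0S: "m0 \<in> S" unfolding S_def m0_def using feas by blast
  have ne: "({..<st} \<times> {..<t}) \<noteq> {}" using st t by auto
  have m0d: "m0 > d" unfolding m0_def
    using ne pos by (subst Min_gr_iff) auto
  have bdd: "bdd_above S"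
  proof (rule bdd_aboveI[of _ "xt / real t"])
    fix x assume "x \<in> S"
    then obtain T' U' V' where x: "x = Min ((\<lambda>(i,j). T' i j) ` ({..<st} \<times> {..<t}))"
      and fe: "feasible_3MDAP t u v st su sv xt xu xv T' U' V'" unfolding S_def by blast
    have le: "x \<le> T' 0 j" if "j < t" for j
      unfolding x using that st by (intro Min_le) auto
    have "(\<Sum>j<t. x) \<le> (\<Sum>j<t. T' 0 j)" using le by (intro sum_mono) auto
    also have "\<dots> = xt" using fe st unfolding feasible_3MDAP_def by auto
    finally have "real t * x \<le> xt" by simp
    then show "x \<le> xt / real t" using t by (simp add: field_simps)
  qed
  have "m0 \<le> Sup S" using m0S bdd by (rule cSup_upper)
  then show ?thesis using fS m0d by simp
qed



lemma sum_split4: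
  fixes F :: "nat \<Rightarrow> 'a::comm_monoid_add"
  assumes "k + 2 \<le> t"
  shows "(\<Sum>j<t. F j) = (\<Sum>j<k. F j) + F k + F (Suc k) + (\<Sum>j\<in>{Suc (Suc k)..<t}. F j)"
proof -
  have "{..<t} = {..<k} \<union> {k, Suc k} \<union> {Suc (Suc k)..<t}" using assms by auto
  then have "(\<Sum>j<t. F j) = (\<Sum>j\<in>{..<k} \<union> {k, Suc k} \<union> {Suc (Suc k)..<t}. F j)" by simp
  also have "\<dots> = (\<Sum>j\<in>{..<k} \<union> {k, Suc k}. F j) + (\<Sum>j\<in>{Suc (Suc k)..<t}. F j)"
    by (rule sum.union_disjoint) auto
  also have "(\<Sum>j\<in>{..<k} \<union> {k, Suc k}. F j) = (\<Sum>j<k. F j) + (\<Sum>j\<in>{k, Suc k}. F j)"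
    by (rule sum.union_disjoint) auto
  finally show ?thesis by (simp add: add.assoc)
qed

lemma telescope_nat_mono:
  fixes g :: "nat \<Rightarrow> nat"
  assumes "\<And>i. g i \<le> g (Suc i)"
  shows "(\<Sum>i<n. g (Suc i) - g i) = g n - g 0"
proof (induction n)
  case 0 then show ?case by simp
next
  case (Suc n)
  have "g 0 \<le> g n" using assms by (induction n) (auto intro: order_trans)
  then show ?case using Suc assms[of n] by simp
qed

lemma shift_sum_cyc:
  fixes g :: "nat \<Rightarrow> 'a::cancel_comm_monoid_add"
  assumes "g n = g 0"
  shows "(\<Sum>i<n. g (Suc i)) = (\<Sum>i<n. g i)"
proof -
  have "g 0 + (\<Sum>i<n. g (Suc i)) = (\<Sum>i<Suc n. g i)" by (rule sum.lessThan_Suc_shift[symmetric])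
  also have "\<dots> = (\<Sum>i<n. g i) + g 0" using assms by simp
  finally show ?thesis by (simp add: add.commute)
qed

lemma case_v1:
  fixes t st su sv :: nat and xt xu xv :: real
  assumes t2: "t \<ge> 2" and st: "st > 0"
    and eqn: "su * 2 + sv * 1 = st * t"
    and eqx: "real su * xu + real sv * xv = real st * xt"
    and svle: "sv \<le> (t - 2) * st"
    and cpos: "xv - (xu - xv) > 0"
  shows "\<exists>T U V. feasible_3MDAP t 2 1 st su sv xt xu xv T U V \<and> (\<forall>i<st. \<forall>j<t. T i j > xu - xv)"
proof -
  define d where "d = xu - xv"
  define c where "c = xv - d"
  have c0: "c > 0" using cpos unfolding c_def d_def by simp
  define Y where "Y n = c/4 + (c/2) * real (n*sv mod st) / real st" for n
  define k where "k i = (Suc i)*sv div st - i*sv div st" for i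
  define T where "T i j = (if j < k i then xv else if j = k i then Y (Suc i) + d
       else if j = Suc (k i) then c - Y i + d else c/2 + d)" for i j
  define U where "U kk e = (if kk < st then (if e = 0 then Y (Suc kk) + d else c - Y (Suc kk) + d)
       else c/2 + d)" for kk e :: nat
  define V where "V (l::nat) (e::nat) = xv" for l e
  have Ybd: "c/4 \<le> Y n \<and> Y n < 3*c/4" for n
  proof -
    have a: "real (n*sv mod st) / real st < 1" using st by simp
    have b: "0 \<le> real (n*sv mod st) / real st" by simp
    have "Y n = c/4 + (c/2) * (real (n*sv mod st) / real st)" unfolding Y_def by simp
    moreover have "(c/2) * (real (n*sv mod st) / real st) < c/2"
      using mult_strict_left_mono[OF a, of "c/2"] c0 by simp
    moreover have "0 \<le> (c/2) * (real (n*sv mod st) / real st)" using b c0 by simp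
    ultimately show ?thesis by simp
  qed
  have kmono: "i*sv div st \<le> (Suc i)*sv div st" for i by (intro div_le_mono) simp
  have kle: "k i + 2 \<le> t" for i
  proof -
    have "(Suc i)*sv div st \<le> (i*sv + (t-2)*st) div st"
      using svle by (intro div_le_mono) simp
    also have "\<dots> = i*sv div st + (t-2)" using st by simp
    finally show ?thesis unfolding k_def using t2 by linarith
  qed
  have Ydiff: "Y (Suc i) - Y i = (c/2) * (real sv / real st - real (k i))" for i
  proof -
    have m1: "real (n*sv mod st) = real (n*sv) - real st * real (n*sv div st)" for n
    proof -
      have "n*sv div st * st + n*sv mod st = n*sv" by (rule div_mult_mod_eq)
      then have "real (n*sv div st) * real st + real (n*sv mod st) = real (n*sv)"
        by (metis of_nat_add of_nat_mult)
      then show ?thesis by (simp add: algebra_simps)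
    qed
    have kk: "real (k i) = real (Suc i * sv div st) - real (i * sv div st)"
      unfolding k_def using kmono[of i] by (simp add: of_nat_diff)
    have A: "Y n = c/4 + (c/2) * (real (n*sv) - real st * real (n*sv div st)) / real st" for n
      unfolding Y_def m1 ..
    have "Y (Suc i) - Y i = (c/2) * ((real (Suc i*sv) - real (i*sv)) / real st
        - (real (Suc i * sv div st) - real (i * sv div st)))"
      unfolding A using st by (simp add: field_simps)
    also have "real (Suc i*sv) - real (i*sv) = real sv" by simp
    finally show ?thesis unfolding kk .
  qed
  have sumk: "(\<Sum>i<st. k i) = sv"
    unfolding k_def using telescope_nat_mono[of "\<lambda>i. i*sv div st" st] kmono st by simp
  have rowT: "(\<Sum>j<t. T i j) = xt" if "i < st" for i
  proof -
    have "(\<Sum>j<t. T i j) = (\<Sum>j<k i. T i j) + T i (k i) + T i (Suc (k i))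
          + (\<Sum>j\<in>{Suc (Suc (k i))..<t}. T i j)" by (rule sum_split4[OF kle])
    also have "(\<Sum>j<k i. T i j) = real (k i) * xv" unfolding T_def by simp
    also have "(\<Sum>j\<in>{Suc (Suc (k i))..<t}. T i j) = real (t - k i - 2) * (c/2 + d)"
      unfolding T_def by simp
    finally have s: "(\<Sum>j<t. T i j) = real (k i) * xv + (Y (Suc i) + d) + (c - Y i + d)
         + real (t - k i - 2) * (c/2 + d)" unfolding T_def by simp
    have tk: "real (t - k i - 2) = real t - real (k i) - 2" using kle[of i] by linarith
    have e1: "2 * real su + real sv = real st * real t" using eqn
      by (metis (mono_tags) mult.commute mult.right_neutral of_nat_add of_nat_mult of_nat_numeral)
    have Ys: "Y (Suc i) = Y i + (c/2) * (real sv / real st - real (k i))" using Ydiff[of i] by (simp add: algebra_simps)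
    have "(\<Sum>j<t. T i j) = (c/2) * (real sv / real st) + real t * xu / 2"
      unfolding s tk Ys unfolding c_def d_def using st by (simp add: field_simps)
    also have "\<dots> = xt"
    proof -
      have "real st * ((c/2) * (real sv / real st) + real t * xu / 2)
          = (c/2) * real sv + (real st * real t) * xu / 2" using st by (simp add: field_simps)
      also have "\<dots> = (c/2) * real sv + (2 * real su + real sv) * xu / 2" using e1 by simp
      also have "\<dots> = real su * xu + real sv * xv" unfolding c_def d_def by (simp add: field_simps)
      also have "\<dots> = real st * xt" by (rule eqx)
      finally show ?thesis using st by simp
    qed
    finally show ?thesis .
  qed
  have rowU: "(\<Sum>j<2. U kk j) = xu" for kk
    unfolding U_def c_def d_def by (simp add: numeral_2_eq_2)
  have rowV: "(\<Sum>j<1. V l j) = xv" for l unfolding V_def by simp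
  have suge: "st \<le> su"
  proof -
    have "sv + 2*st \<le> t * st" using svle t2
      by (metis add.commute le_add_diff_inverse2 mult.commute mult_2_right nat_le_linear
          add_le_mono1 distrib_left le_diff_conv2 mult_le_mono1)
    then show ?thesis using eqn by (simp add: mult.commute)
  qed
  have ET: "entries T st t = (\<Sum>i<st. replicate_mset (k i) xv + {#Y (Suc i) + d#} + {#c - Y i + d#}
        + replicate_mset (t - k i - 2) (c/2 + d))"
    unfolding entries_sum
  proof (rule sum.cong[OF refl])
    fix i assume "i \<in> {..<st}"
    have "(\<Sum>j<t. {#T i j#}) = (\<Sum>j<k i. {#T i j#}) + {#T i (k i)#} + {#T i (Suc (k i))#}
          + (\<Sum>j\<in>{Suc (Suc (k i))..<t}. {#T i j#})" by (rule sum_split4[OF kle])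
    also have "(\<Sum>j<k i. {#T i j#}) = (\<Sum>j<k i. {#xv#})" unfolding T_def by (rule sum.cong) auto
    also have "\<dots> = replicate_mset (k i) xv" by (simp add: sum_const_mset)
    also have "(\<Sum>j\<in>{Suc (Suc (k i))..<t}. {#T i j#}) = (\<Sum>j\<in>{Suc (Suc (k i))..<t}. {#c/2 + d#})"
      unfolding T_def by (rule sum.cong) auto
    also have "\<dots> = replicate_mset (t - k i - 2) (c/2 + d)" by (simp add: sum_const_mset)
    finally show "(\<Sum>j<t. {#T i j#}) = replicate_mset (k i) xv + {#Y (Suc i) + d#} + {#c - Y i + d#}
        + replicate_mset (t - k i - 2) (c/2 + d)" unfolding T_def by simp
  qed
  also have "\<dots> = replicate_mset sv xv + (\<Sum>i<st. {#Y (Suc i) + d#}) + (\<Sum>i<st. {#c - Y i + d#})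
        + replicate_mset (\<Sum>i<st. t - k i - 2) (c/2 + d)"
    by (simp only: sum.distrib sum_replicate_mset sumk)
  also have "(\<Sum>i<st. {#c - Y i + d#}) = (\<Sum>i<st. {#c - Y (Suc i) + d#})"
    by (rule shift_sum_cyc[symmetric]) (simp add: Y_def)
  also have "(\<Sum>i<st. t - k i - 2) = 2 * (su - st)"
  proof -
    have "(\<Sum>i<st. t - k i - 2) + (\<Sum>i<st. k i) + (\<Sum>i<st. 2) = (\<Sum>i<st. t)"
      unfolding sum.distrib[symmetric] using kle t2 by (intro sum.cong) auto
    then show ?thesis using sumk eqn by simp
  qed
  finally have ET': "entries T st t = replicate_mset sv xv + (\<Sum>i<st. {#Y (Suc i) + d#})
     + (\<Sum>i<st. {#c - Y (Suc i) + d#}) + replicate_mset (2 * (su - st)) (c/2 + d)" .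
  have EU: "entries U su 2 = (\<Sum>i<st. {#Y (Suc i) + d#}) + (\<Sum>i<st. {#c - Y (Suc i) + d#})
       + replicate_mset (2 * (su - st)) (c/2 + d)"
  proof -
    have "entries U su 2 = (\<Sum>kk<su. {#U kk 0#} + {#U kk 1#})"
      unfolding entries_sum by (simp add: numeral_2_eq_2)
    also have "\<dots> = (\<Sum>kk<st. {#U kk 0#} + {#U kk 1#}) + (\<Sum>kk\<in>{st..<su}. {#U kk 0#} + {#U kk 1#})"
      using suge by (metis (no_types, lifting) lessThan_atLeast0 sum.atLeastLessThan_concat zero_le)
    also have "(\<Sum>kk<st. {#U kk 0#} + {#U kk 1#}) = (\<Sum>i<st. {#Y (Suc i) + d#} + {#c - Y (Suc i) + d#})"
      unfolding U_def by (rule sum.cong) auto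
    also have "(\<Sum>kk\<in>{st..<su}. {#U kk 0#} + {#U kk 1#}) = (\<Sum>kk\<in>{st..<su}. replicate_mset 2 (c/2+d))"
      unfolding U_def by (rule sum.cong) (auto simp: numeral_2_eq_2)
    also have "\<dots> = replicate_mset (2 * (su - st)) (c/2 + d)"
      by (simp add: sum_replicate_mset mult.commute)
    finally show ?thesis by (simp only: sum.distrib add.assoc)
  qed
  have EV: "entries V sv 1 = replicate_mset sv xv"
    unfolding entries_sum V_def by (simp add: sum_const_mset)
  have ent: "entries T st t = entries U su 2 + entries V sv 1"
    unfolding ET' EU EV by (simp add: add_ac)
  have feas: "feasible_3MDAP t 2 1 st su sv xt xu xv T U V"
    unfolding feasible_3MDAP_def using rowT rowU rowV ent by blast
  have pos: "\<forall>i<st. \<forall>j<t. T i j > xu - xv"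
  proof (intro allI impI)
    fix i j
    have "c/4 \<le> Y (Suc i)" "Y i < 3*c/4" using Ybd by auto
    then show "T i j > xu - xv" unfolding T_def using c0 unfolding c_def d_def by auto
  qed
  show ?thesis using feas pos by blast
qed



lemma card_Ugroups_gen:
  fixes g :: "nat \<Rightarrow> nat"
  assumes "\<And>r. g r \<le> g (Suc r) \<and> g (Suc r) \<le> g r + 1"
  shows "card {r. r < n \<and> g (Suc r) \<noteq> g r} = g n - g 0"
proof (induction n)
  case 0 then show ?case by simp
next
  case (Suc n)
  have mono: "g 0 \<le> g n" for n
    by (induction n) (use assms in \<open>auto intro: order_trans\<close>)
  show ?case
  proof (cases "g (Suc n) \<noteq> g n")
    case True
    then have e: "{r. r < Suc n \<and> g (Suc r) \<noteq> g r} = insert n {r. r < n \<and> g (Suc r) \<noteq> g r}"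
      by (auto simp: less_Suc_eq)
    have "card {r. r < Suc n \<and> g (Suc r) \<noteq> g r} = Suc (card {r. r < n \<and> g (Suc r) \<noteq> g r})"
      unfolding e by (rule card_insert_disjoint) auto
    then show ?thesis using Suc.IH True assms[of n] mono[of n] by linarith
  next
    case False
    then have e: "{r. r < Suc n \<and> g (Suc r) \<noteq> g r} = {r. r < n \<and> g (Suc r) \<noteq> g r}"
      by (auto simp: less_Suc_eq)
    then show ?thesis using Suc.IH False by simp
  qed
qed

lemma card_Ugroups:
  assumes R: "R > 0" and le: "su \<le> R"
  shows "card {r. r < n \<and> (Suc r)*su div R \<noteq> r*su div R} = n*su div R"
proof -
  have "(\<lambda>r. r*su div R) r \<le> (\<lambda>r. r*su div R) (Suc r) \<and> (\<lambda>r. r*su div R) (Suc r) \<le> (\<lambda>r. r*su div R) r + 1" for r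
  proof -
    have a: "r*su div R \<le> (Suc r)*su div R" by (intro div_le_mono) simp
    have "(Suc r)*su div R \<le> (r*su + R) div R" using le by (intro div_le_mono) simp
    also have "\<dots> = r*su div R + 1" using R by simp
    finally show ?thesis using a by simp
  qed
  from card_Ugroups_gen[of "\<lambda>r. r*su div R", OF this, of n] show ?thesis by simp
qed

lemma sum_split2:
  fixes F :: "nat \<Rightarrow> 'a::comm_monoid_add"
  assumes "2 \<le> n"
  shows "(\<Sum>j<n. F j) = F 0 + F 1 + (\<Sum>j\<in>{2..<n}. F j)"
  using sum_split4[of 0 n F] assms by (simp add: numeral_2_eq_2)

lemma case_v2:
  fixes t v st su sv :: nat and xt xu xv :: real
  assumes t2: "t \<ge> 2" and v2: "v \<ge> 2" and st: "st > 0" and su: "su > 0"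
    and eqn: "su * (v+1) + sv * v = st * t"
    and eqx: "real su * xu + real sv * xv = real st * xt"
    and cpos: "xv - real v * (xu - xv) > 0"
  shows "\<exists>T U V. feasible_3MDAP t (v+1) v st su sv xt xu xv T U V \<and> (\<forall>i<st. \<forall>j<t. T i j > xu - xv)"
proof -
  define d where "d = xu - xv"
  define c where "c = xv - real v * d"
  have c0: "c > 0" using cpos unfolding c_def d_def by simp
  define R where "R = su + sv"
  define N where "N = st * t"
  have R0: "R > 0" using su unfolding R_def by simp
  have NR: "N = v * R + su" using eqn unfolding N_def R_def by (simp add: algebra_simps)
  have N0: "N > 0" using NR su by simp
  define h where "h = c * real R / real N"
  have h0: "h > 0" unfolding h_def using c0 R0 N0 by simp
  define m :: nat where "m = (if t dvd R then 1 else 0)"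
  define P where "P r = h * real (r*su mod R) / real R" for r
  define E where "E q = (if 0 < q \<and> q < R \<and> \<not> t dvd q then P q
      else if R + m < q \<and> q < 2*R + m \<and> t dvd (q - (R+m)) then P (q - (R+m)) else 0)" for q
  define f where "f q = h + d + E (Suc q) - E q" for q
  define Ug where "Ug = {r. r < R \<and> (Suc r)*su div R \<noteq> r*su div R}"
  define Vg where "Vg = {r. r < R \<and> (Suc r)*su div R = r*su div R}"
  have suR: "su \<le> R" unfolding R_def by simp
  have cardU: "card Ug = su" unfolding Ug_def using card_Ugroups[OF R0 suR, of R] R0 by simp
  have UVun: "Ug \<union> Vg = {..<R}" and UVdis: "Ug \<inter> Vg = {}" unfolding Ug_def Vg_def by auto
  have cardV: "card Vg = sv"
  proof -
    have "card Ug + card Vg = R" using card_Un_disjoint[of Ug Vg] UVun UVdis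
      by (metis card_lessThan finite_Un finite_lessThan)
    then show ?thesis using cardU unfolding R_def by simp
  qed
  obtain \<phi> where phi: "bij_betw \<phi> {..<su} Ug"
    using finite_same_card_bij[of "{..<su}" Ug] cardU unfolding Ug_def by auto
  obtain \<psi> where psi: "bij_betw \<psi> {..<sv} Vg"
    using finite_same_card_bij[of "{..<sv}" Vg] cardV unfolding Vg_def by auto
  define T where "T i j = f (i*t + j)" for i j
  define U where "U k e = (if e = 0 then f (\<phi> k) else if e = 1 then f (R + m + \<phi> k) else h + d)" for k e :: nat
  define V where "V k e = (if e = 0 then f (\<psi> k) else if e = 1 then f (R + m + \<psi> k) else h + d)" for k e :: nat
  have P0: "0 \<le> P r \<and> P r < h" for r
  proof -
    have "real (r*su mod R) / real R < 1" using R0 by simp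
    then have "h * (real (r*su mod R) / real R) < h * 1" using h0 by (rule mult_strict_left_mono)
    then show ?thesis unfolding P_def using h0 by simp
  qed
  have PR: "P 0 = 0" "P R = 0" unfolding P_def by auto
  have E0: "0 \<le> E q \<and> E q < h" for q unfolding E_def using P0 h0 by auto
  have Ez: "E q = 0" if "q \<ge> 2*R + m \<or> q = 0 \<or> (R \<le> q \<and> q \<le> R + m)" for q
    unfolding E_def using that by auto
  have Et: "E (i*t) = 0" for i
  proof -
    have "\<not> (R + m < i*t \<and> t dvd (i*t - (R+m)))"
    proof
      assume a: "R + m < i*t \<and> t dvd (i*t - (R+m))"
      have a2: "t dvd (i*t - (R+m))" using a by simp
      have "t dvd (i*t - (i*t - (R+m)))" by (rule dvd_diff_nat[OF _ a2]) simp
      moreover have "i*t - (i*t - (R+m)) = R + m" using a by simp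
      ultimately have tRm: "t dvd R + m" by metis
      show False
      proof (cases "t dvd R")
        case True
        then have "t dvd R + 1" using tRm unfolding m_def by simp
        then have "t dvd 1" using True by (metis dvd_add_right_iff)
        then show False using t2 by simp
      next
        case False
        then show False using tRm unfolding m_def by simp
      qed
    qed
    then show ?thesis unfolding E_def by auto
  qed
  have E4: "E x + E (R + m + x) = P x" if "x \<le> R" for x
  proof (cases "x = 0 \<or> x = R")
    case True then show ?thesis using PR Ez by auto
  next
    case False
    then have x: "0 < x" "x < R" using that by auto
    show ?thesis
    proof (cases "t dvd x")
      case True
      then show ?thesis unfolding E_def using x by auto
    next
      case False
      then show ?thesis unfolding E_def using x by auto
    qed
  qed
  have Pdiff: "P (Suc r) - P r = h * (real su - (if r \<in> Ug then real R else 0)) / real R"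
    if "r < R" for r
  proof -
    have m1: "real (n*su mod R) = real (n*su) - real R * real (n*su div R)" for n
    proof -
      have "n*su div R * R + n*su mod R = n*su" by (rule div_mult_mod_eq)
      then have "real (n*su div R) * real R + real (n*su mod R) = real (n*su)"
        by (metis of_nat_add of_nat_mult)
      then show ?thesis by (simp add: algebra_simps)
    qed
    have A: "P n = h * (real (n*su) - real R * real (n*su div R)) / real R" for n
      unfolding P_def m1 ..
    have st1: "(Suc r)*su div R = r*su div R + (if r \<in> Ug then 1 else 0)"
    proof -
      have a: "r*su div R \<le> (Suc r)*su div R" by (intro div_le_mono) simp
      have "(Suc r)*su div R \<le> (r*su + R) div R" using suR by (intro div_le_mono) simp
      also have "\<dots> = r*su div R + 1" using R0 by simp
      finally show ?thesis using a that unfolding Ug_def by auto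
    qed
    have "P (Suc r) - P r = h * ((real (Suc r*su) - real (r*su)) - real R * (real (Suc r * su div R) - real (r*su div R))) / real R"
      unfolding A using R0 by (simp add: field_simps)
    also have "real (Suc r*su) - real (r*su) = real su" by simp
    also have "real (Suc r * su div R) - real (r*su div R) = (if r \<in> Ug then 1 else 0)"
      unfolding st1 by simp
    finally show ?thesis by (simp add: if_distrib)
  qed
  have hN: "h * real N = c * real R" unfolding h_def using N0 by simp
  have hNR: "h * (real v * real R + real su) = c * real R"
    using hN unfolding NR by simp
  have Rc: "c * real R = real st * (xt - real t * d)"
  proof -
    have e1: "real su * real (v+1) + real sv * real v = real st * real t"
      using eqn by (metis of_nat_add of_nat_mult)
    have "c * real R = real su * (xu - real (v+1) * d) + real sv * (xv - real v * d)"
      unfolding c_def R_def d_def by (simp add: algebra_simps)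
    also have "\<dots> = (real su * xu + real sv * xv) - (real su * real (v+1) + real sv * real v) * d"
      by (simp add: algebra_simps)
    also have "\<dots> = real st * (xt - real t * d)" unfolding eqx e1 by (simp add: algebra_simps)
    finally show ?thesis .
  qed
  have rowT: "(\<Sum>j<t. T i j) = xt" for i
  proof -
    have "(\<Sum>j<t. T i j) = (\<Sum>j<t. (h + d) + (E (i*t + Suc j) - E (i*t + j)))"
      unfolding T_def f_def by (intro sum.cong) auto
    also have "\<dots> = real t * (h + d) + (E (i*t + t) - E (i*t))"
    proof -
      have tel: "(\<Sum>j<t. E (Suc (i*t + j)) - E (i*t + j)) = E (i*t + t) - E (i*t)"
        using sum_lessThan_telescope[of "\<lambda>j. E (i*t + j)" t] by simp
      show ?thesis by (simp add: sum.distrib tel)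
    qed
    also have "E (i*t + t) = 0" using Et[of "Suc i"] by (simp add: add.commute)
    also have "E (i*t) = 0" by (rule Et)
    also have "real t * h = xt - real t * d"
    proof -
      have "real t * h = c * real R / real st" unfolding h_def N_def using st t2 by (simp add: field_simps)
      then show ?thesis unfolding Rc using st by simp
    qed
    then have "real t * (h + d) + (0 - 0) = xt" by (simp add: algebra_simps)
    finally show ?thesis .
  qed
  have grp: "f r + f (R + m + r) = 2 * (h + d) + h * (real su - (if r \<in> Ug then real R else 0)) / real R"
    if "r < R" for r
  proof -
    have "f r + f (R + m + r) = 2*(h+d) + ((E (Suc r) + E (R + m + Suc r)) - (E r + E (R + m + r)))"
      unfolding f_def by simp
    also have "\<dots> = 2*(h+d) + (P (Suc r) - P r)" using E4[of r] E4[of "Suc r"] that by simp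
    finally show ?thesis using Pdiff[OF that] by simp
  qed
  have rowU: "(\<Sum>e<v+1. U k e) = xu" if "k < su" for k
  proof -
    have r: "\<phi> k \<in> Ug" using phi that by (auto simp: bij_betw_def)
    then have rR: "\<phi> k < R" unfolding Ug_def by simp
    have "(\<Sum>e<v+1. U k e) = U k 0 + U k 1 + (\<Sum>e\<in>{2..<v+1}. U k e)"
      using v2 by (intro sum_split2) simp
    also have "(\<Sum>e\<in>{2..<v+1}. U k e) = (\<Sum>e\<in>{2..<v+1}. h + d)" unfolding U_def by (intro sum.cong) auto
    also have "U k 0 + U k 1 = f (\<phi> k) + f (R + m + \<phi> k)" unfolding U_def by simp
    also have "\<dots> = 2 * (h + d) + h * (real su - real R) / real R" using grp[OF rR] r by simp
    finally have "(\<Sum>e<v+1. U k e) = 2 * (h + d) + h * (real su - real R) / real R + (real v - 1) * (h + d)"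
      using v2 by (simp add: of_nat_diff)
    also have "\<dots> = (h * (real v * real R + real su)) / real R + (real v + 1) * d"
      using R0 by (simp add: field_simps)
    also have "\<dots> = xu" unfolding hNR using R0 unfolding c_def d_def by (simp add: field_simps)
    finally show ?thesis .
  qed
  have rowV: "(\<Sum>e<v. V k e) = xv" if "k < sv" for k
  proof -
    have r: "\<psi> k \<in> Vg" using psi that by (auto simp: bij_betw_def)
    then have rR: "\<psi> k < R" and rU: "\<psi> k \<notin> Ug" unfolding Ug_def Vg_def by auto
    have "(\<Sum>e<v. V k e) = V k 0 + V k 1 + (\<Sum>e\<in>{2..<v}. V k e)"
      using v2 by (intro sum_split2) simp
    also have "(\<Sum>e\<in>{2..<v}. V k e) = (\<Sum>e\<in>{2..<v}. h + d)" unfolding V_def by (intro sum.cong) auto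
    also have "V k 0 + V k 1 = f (\<psi> k) + f (R + m + \<psi> k)" unfolding V_def by simp
    also have "\<dots> = 2 * (h + d) + h * real su / real R" using grp[OF rR] rU by simp
    finally have "(\<Sum>e<v. V k e) = 2 * (h + d) + h * real su / real R + (real v - 2) * (h + d)"
      using v2 by (simp add: of_nat_diff)
    also have "\<dots> = (h * (real v * real R + real su)) / real R + real v * d"
      using R0 by (simp add: field_simps)
    also have "\<dots> = xv" unfolding hNR using R0 unfolding c_def d_def by (simp add: field_simps)
    finally show ?thesis .
  qed
  define G where "G r = {#f r#} + {#f (R + m + r)#}" for r
  have mR: "2*R + m \<le> N"
  proof -
    have "2*R \<le> v*R" using v2 by (rule mult_le_mono1)
    moreover have "m \<le> su" using su unfolding m_def by simp
    ultimately show ?thesis using NR by linarith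
  qed
  have ET: "entries T st t = (\<Sum>r<R. G r) + replicate_mset (N - 2*R) (h + d)"
  proof -
    have "entries T st t = (\<Sum>q<N. {#f q#})"
      unfolding entries_sum T_def N_def by (rule sum_blocks[symmetric])
    also have "{..<N} = {..<R} \<union> {R..<R+m} \<union> {R+m..<2*R+m} \<union> {2*R+m..<N}" using mR by auto
    also have "(\<Sum>q\<in>{..<R} \<union> {R..<R+m} \<union> {R+m..<2*R+m} \<union> {2*R+m..<N}. {#f q#}) =
       (\<Sum>q<R. {#f q#}) + (\<Sum>q\<in>{R..<R+m}. {#f q#}) + (\<Sum>q\<in>{R+m..<2*R+m}. {#f q#}) + (\<Sum>q\<in>{2*R+m..<N}. {#f q#})"
      by (subst sum.union_disjoint, auto)+
    also have "(\<Sum>q\<in>{R..<R+m}. {#f q#}) = (\<Sum>q\<in>{R..<R+m}. {#h + d#})"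
      unfolding f_def using Ez by (intro sum.cong) auto
    also have "(\<Sum>q\<in>{2*R+m..<N}. {#f q#}) = (\<Sum>q\<in>{2*R+m..<N}. {#h + d#})"
      unfolding f_def using Ez by (intro sum.cong) auto
    also have "(\<Sum>q\<in>{R+m..<2*R+m}. {#f q#}) = (\<Sum>r<R. {#f (R + m + r)#})"
    proof -
      have "{R+m..<2*R+m} = {0 + (R+m)..<R + (R+m)}" by (simp add: mult_2 add.assoc)
      then show ?thesis using sum.shift_bounds_nat_ivl[of "\<lambda>q. {#f q#}" 0 "R+m" R]
        by (simp add: lessThan_atLeast0 add.commute)
    qed
    finally have "entries T st t = (\<Sum>q<R. {#f q#}) + (\<Sum>r<R. {#f (R + m + r)#})
        + (replicate_mset m (h+d) + replicate_mset (N - (2*R+m)) (h+d))"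
      by (simp add: sum_const_mset add_ac)
    also have "replicate_mset m (h+d) + replicate_mset (N - (2*R+m)) (h+d) = replicate_mset (N - 2*R) (h+d)"
      using mR by (simp add: rep_plus[symmetric])
    finally show ?thesis unfolding G_def by (simp only: sum.distrib)
  qed
  have EU: "entries U su (v+1) = (\<Sum>r\<in>Ug. G r) + replicate_mset (su * (v - 1)) (h + d)"
  proof -
    have "entries U su (v+1) = (\<Sum>k<su. G (\<phi> k) + replicate_mset (v - 1) (h + d))"
      unfolding entries_sum
    proof (rule sum.cong[OF refl])
      fix k assume "k \<in> {..<su}"
      have "(\<Sum>e<v+1. {#U k e#}) = {#U k 0#} + {#U k 1#} + (\<Sum>e\<in>{2..<v+1}. {#U k e#})"
        using v2 by (intro sum_split2) simp
      also have "(\<Sum>e\<in>{2..<v+1}. {#U k e#}) = (\<Sum>e\<in>{2..<v+1}. {#h + d#})"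
        unfolding U_def by (intro sum.cong) auto
      also have "(\<Sum>e\<in>{2..<v+1}. {#h + d#}) = replicate_mset (v - 1) (h + d)"
        by (simp only: sum_const_mset[OF finite_atLeastLessThan] card_atLeastLessThan) simp
      also have "{#U k 0#} + {#U k 1#} = G (\<phi> k)" unfolding U_def G_def by simp
      finally show "(\<Sum>e<v+1. {#U k e#}) = G (\<phi> k) + replicate_mset (v - 1) (h + d)" .
    qed
    also have "\<dots> = (\<Sum>k<su. G (\<phi> k)) + replicate_mset (su * (v - 1)) (h + d)"
      by (simp add: sum.distrib sum_replicate_mset)
    also have "(\<Sum>k<su. G (\<phi> k)) = (\<Sum>r\<in>Ug. G r)" by (rule sum.reindex_bij_betw[OF phi])
    finally show ?thesis .
  qed
  have EV: "entries V sv v = (\<Sum>r\<in>Vg. G r) + replicate_mset (sv * (v - 2)) (h + d)"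
  proof -
    have "entries V sv v = (\<Sum>k<sv. G (\<psi> k) + replicate_mset (v - 2) (h + d))"
      unfolding entries_sum
    proof (rule sum.cong[OF refl])
      fix k assume "k \<in> {..<sv}"
      have "(\<Sum>e<v. {#V k e#}) = {#V k 0#} + {#V k 1#} + (\<Sum>e\<in>{2..<v}. {#V k e#})"
        using v2 by (intro sum_split2) simp
      also have "(\<Sum>e\<in>{2..<v}. {#V k e#}) = (\<Sum>e\<in>{2..<v}. {#h + d#})"
        unfolding V_def by (intro sum.cong) auto
      also have "(\<Sum>e\<in>{2..<v}. {#h + d#}) = replicate_mset (v - 2) (h + d)"
        by (simp only: sum_const_mset[OF finite_atLeastLessThan] card_atLeastLessThan)
      also have "{#V k 0#} + {#V k 1#} = G (\<psi> k)" unfolding V_def G_def by simp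
      finally show "(\<Sum>e<v. {#V k e#}) = G (\<psi> k) + replicate_mset (v - 2) (h + d)" .
    qed
    also have "\<dots> = (\<Sum>k<sv. G (\<psi> k)) + replicate_mset (sv * (v - 2)) (h + d)"
      by (simp add: sum.distrib sum_replicate_mset)
    also have "(\<Sum>k<sv. G (\<psi> k)) = (\<Sum>r\<in>Vg. G r)" by (rule sum.reindex_bij_betw[OF psi])
    finally show ?thesis .
  qed
  have cnt: "su * (v - 1) + sv * (v - 2) = N - 2*R"
  proof -
    obtain w where w: "v = 2 + w" using le_Suc_ex[OF v2] by blast
    have "su * (v - 1) + sv * (v - 2) + 2*R = su * (v+1) + sv * v"
      unfolding R_def w by (simp add: algebra_simps)
    then show ?thesis using eqn unfolding N_def by simp
  qed
  have ent: "entries T st t = entries U su (v+1) + entries V sv v"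
  proof -
    have "(\<Sum>r<R. G r) = (\<Sum>r\<in>Ug. G r) + (\<Sum>r\<in>Vg. G r)"
      unfolding UVun[symmetric] by (rule sum.union_disjoint) (use UVdis in \<open>auto simp: Ug_def Vg_def\<close>)
    then show ?thesis unfolding ET EU EV cnt[symmetric] rep_plus by (simp add: add_ac)
  qed
  have feas: "feasible_3MDAP t (v+1) v st su sv xt xu xv T U V"
    unfolding feasible_3MDAP_def using rowT rowU rowV ent by blast
  have pos: "\<forall>i<st. \<forall>j<t. T i j > xu - xv"
  proof (intro allI impI)
    fix i j
    have "0 \<le> E (Suc (i*t+j))" "E (i*t+j) < h" using E0 by auto
    then show "T i j > xu - xv" unfolding T_def f_def d_def by simp
  qed
  show ?thesis using feas pos by blast
qed



theorem lemma14:
  fixes t u v st su sv :: nat and xt xu xv :: real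
  assumes "is_3MDAP t u v st su sv xt xu xv"
    and "u = v + 1"
  shows "f_3MDAP t u v st su sv xt xu xv > xu - xv"
proof -
  have t2: "t \<ge> 2" and v1: "v \<ge> 1" and st: "st > 0" and su: "su > 0"
    and vc: "v = 1 \<longrightarrow> int v * int sv \<le> (int t - 2) * int st"
    and eqn: "su * u + sv * v = st * t"
    and eqx: "real su * xu + real sv * xv = real st * xt"
    and rat: "xu / real u < xv / real v"
    using assms(1) unfolding is_3MDAP_def by auto
  have cpos: "xv - real v * (xu - xv) > 0"
  proof -
    have "xu / (real v + 1) < xv / real v" using rat assms(2) by (simp add: add.commute)
    then have "xu * real v < xv * (real v + 1)" using v1
      by (simp add: divide_less_eq less_divide_eq field_simps)
    then show ?thesis by (simp add: algebra_simps)
  qed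
  obtain T U V where feas: "feasible_3MDAP t u v st su sv xt xu xv T U V"
    and pos: "\<forall>i<st. \<forall>j<t. T i j > xu - xv"
  proof (cases "v = 1")
    case True
    have svle: "sv \<le> (t - 2) * st"
    proof -
      have "int sv \<le> (int t - 2) * int st" using vc True by simp
      also have "(int t - 2) = int (t - 2)" using t2 by simp
      finally show ?thesis by (metis of_nat_le_iff of_nat_mult)
    qed
    have uv: "u = 2" "v = 1" using True assms(2) by auto
    have cp: "xv - (xu - xv) > 0" using cpos uv by simp
    have "\<exists>T U V. feasible_3MDAP t u v st su sv xt xu xv T U V \<and> (\<forall>i<st. \<forall>j<t. T i j > xu - xv)"
      unfolding uv using case_v1[OF t2 st eqn[unfolded uv] eqx svle cp] .
    then show ?thesis using that by blast
  next
    case False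
    then have v2: "v \<ge> 2" using v1 by simp
    have "\<exists>T U V. feasible_3MDAP t (v+1) v st su sv xt xu xv T U V \<and> (\<forall>i<st. \<forall>j<t. T i j > xu - xv)"
      using case_v2[OF t2 v2 st su eqn[unfolded assms(2)] eqx cpos] .
    then show ?thesis using that assms(2) by blast
  qed
  show ?thesis using f_gt_from_witness[OF feas st _ ] pos t2 by simp
qed


end
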